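(* Let $\bm X=[\bm x_1,\dots,\bm x_p]\in\mathbb{R}^{n\times p}$ have full column rank and unit-norm columns. Fix $j\in[p]$, let $\bm X_{\backslash j}$ be $\bm X$ with column $j$ removed, let $\bm X_{\backslash j}=\bm U_{\backslash j}\bm D_{\backslash j}\bm V_{\backslash j}^\top$ be a (thin) singular value decomposition with $\bm U_{\backslash j}\in\mathbb{R}^{n\times(p-1)}$ having orthonormal columns, and let $\sigma_j^2=\|\bm x_j-\bm U_{\backslash j}\bm U_{\backslash j}^\top\bm x_j\|^2$ (so $\sigma_j>0$). For $s_j\in\mathbb{R}$, a vector $\widetilde{\bm x}_j\in\mathbb{R}^n$ satisfies (i) $\bm X_{\backslash j}^\top\widetilde{\bm x}_j=\bm X_{\backslash j}^\top\bm x_j$, (ii) $\bm x_j^\top\widetilde{\bm x}_j=1-s_j$, (iii) $\widetilde{\bm x}_j^\top\widetilde{\bm x}_j=1$ if and only if $s_j\in[0,2\sigma_j^2]$ and $$\widetilde{\bm x}_j=\frac{s_j}{\sigma_j^2}\bm U_{\backslash j}\bm U_{\backslash j}^\top\bm x_j+\Big(1-\frac{s_j}{\sigma_j^2}\Big)\bm x_j+\bm r_j$$ for some vector $\bm r_j\in\mathbb{R}^n$ with $\bm X^\top\bm r_j=\bm 0$ and $\|\bm r_j\|=(2s_j-s_j^2/\sigma_j^2)^{1/2}$. *)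

theory Defs
  imports "HOL-Analysis.Analysis"
begin

text \<open>Matrices X in R^(n x p) are represented by their columns x :: nat => real^'n,
  column k (k < p) being x k (0-indexed). The column index of X with column j removed:
  column m of X_{\j} is column (del_idx j m) of X.\<close>

definition del_idx :: "nat \<Rightarrow> nat \<Rightarrow> nat" where
  "del_idx j m = (if m < j then m else Suc m)"

definition UUt :: "(nat \<Rightarrow> real ^ 'n) \<Rightarrow> nat \<Rightarrow> real ^ 'n \<Rightarrow> real ^ 'n" where
  "UUt u m y = (\<Sum>l<m. (u l \<bullet> y) *\<^sub>R u l)"

definition full_col_rank :: "(nat \<Rightarrow> real ^ 'n) \<Rightarrow> nat \<Rightarrow> bool" where
  "full_col_rank x p = (\<forall>c::nat \<Rightarrow> real. (\<Sum>k<p. c k *\<^sub>R x k) = 0 \<longrightarrow> (\<forall>k<p. c k = 0))"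

text \<open>Thin SVD X_{\j} = U D V^T: U is n x (p-1) with orthonormal columns u,
  D = diag(d) with d >= 0, V is (p-1) x (p-1) orthogonal with entries v a b.\<close>
definition thin_svd_del :: "(nat \<Rightarrow> real ^ 'n) \<Rightarrow> nat \<Rightarrow> nat \<Rightarrow>
    (nat \<Rightarrow> real ^ 'n) \<Rightarrow> (nat \<Rightarrow> real) \<Rightarrow> (nat \<Rightarrow> nat \<Rightarrow> real) \<Rightarrow> bool" where
  "thin_svd_del x p j u d v =
     ((\<forall>l<p-1. \<forall>l'<p-1. u l \<bullet> u l' = (if l = l' then 1 else 0)) \<and>
      (\<forall>l<p-1. d l \<ge> 0) \<and>
      (\<forall>l<p-1. \<forall>l'<p-1. (\<Sum>m<p-1. v m l * v m l') = (if l = l' then 1 else 0)) \<and>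
      (\<forall>m<p-1. x (del_idx j m) = (\<Sum>l<p-1. (d l * v m l) *\<^sub>R u l)))"

end

theory Submission imports Defs begin

lemma rank_inj:
  assumes "full_col_rank x p" shows "inj_on x {..<p}"
proof (rule inj_onI, rule ccontr)
  fix a b assume ab: "a \<in> {..<p}" "b \<in> {..<p}" "x a = x b" "a \<noteq> b"
  define c where "c k = (if k = a then 1 else if k = b then -1 else (0::real))" for k
  have "(\<Sum>k<p. c k *\<^sub>R x k) = (\<Sum>k\<in>{a,b}. c k *\<^sub>R x k)"
    by (rule sum.mono_neutral_right) (use ab in \<open>auto simp: c_def\<close>)
  also have "\<dots> = 0" using ab by (simp add: c_def)
  finally have "\<forall>k<p. c k = 0" using assms unfolding full_col_rank_def by blast
  thus False using ab by (auto simp: c_def)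
qed

lemma rank_indep:
  assumes "full_col_rank x p" shows "independent (x ` {..<p})"
proof
  assume "dependent (x ` {..<p})"
  then obtain c where c: "\<exists>v\<in>x ` {..<p}. c v \<noteq> 0" "(\<Sum>v\<in>x ` {..<p}. c v *\<^sub>R v) = 0"
    using dependent_finite[of "x ` {..<p}"] by auto
  have "(\<Sum>k<p. c (x k) *\<^sub>R x k) = 0"
    using c(2) sum.reindex[OF rank_inj[OF assms], of "\<lambda>v. c v *\<^sub>R v"] by simp
  moreover have "(\<Sum>k<p. c (x k) *\<^sub>R x k) = 0 \<longrightarrow> (\<forall>k<p. c (x k) = 0)"
    using assms unfolding full_col_rank_def by (rule spec)
  ultimately have "\<forall>k<p. c (x k) = 0" by blast
  thus False using c(1) by auto
qed

lemma rank_notin: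
  assumes "full_col_rank x p" "j < p"
  shows "x j \<notin> span (x ` ({..<p} - {j}))"
proof -
  have e: "x ` {..<p} - {x j} = x ` ({..<p} - {j})"
    using rank_inj[OF assms(1)] assms(2) by (auto simp: inj_on_def)
  show ?thesis using rank_indep[OF assms(1)] assms(2) unfolding dependent_def
    by (metis e imageI lessThan_iff)
qed

lemma UUt_orth:
  assumes "\<forall>l<m. \<forall>l'<m. u l \<bullet> u l' = (if l = l' then 1 else 0)" "l < m"
  shows "u l \<bullet> (y - UUt u m y) = 0"
proof -
  have "u l \<bullet> UUt u m y = (\<Sum>l'<m. (u l' \<bullet> y) * (u l \<bullet> u l'))"
    by (simp add: UUt_def inner_sum_right)
  also have "\<dots> = (\<Sum>l'<m. if l' = l then u l \<bullet> y else 0)"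
    by (rule sum.cong) (use assms in \<open>auto simp: inner_commute\<close>)
  also have "\<dots> = u l \<bullet> y" using assms(2) by simp
  finally show ?thesis by (simp add: inner_diff_right)
qed

lemma UUt_span: "UUt u m y \<in> span (u ` {..<m})"
  unfolding UUt_def by (intro span_sum span_scale span_base) auto

lemma UUt_orth_span:
  assumes "\<forall>l<m. \<forall>l'<m. u l \<bullet> u l' = (if l = l' then 1 else 0)" "z \<in> span (u ` {..<m})"
  shows "z \<bullet> (y - UUt u m y) = 0"
proof -
  have "orthogonal (y - UUt u m y) z"
    by (rule orthogonal_to_span[OF assms(2)])
       (use UUt_orth[OF assms(1)] in \<open>auto simp: orthogonal_def inner_commute\<close>)
  thus ?thesis by (simp add: orthogonal_def inner_commute)
qed

lemma span_eq:
  assumes rank: "full_col_rank x p" and j: "j < p" and svd: "thin_svd_del x p j u d v"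
  shows "span (u ` {..<p-1}) = span (x ` ({..<p} - {j}))"
proof -
  have sub: "x ` ({..<p} - {j}) \<subseteq> span (u ` {..<p-1})"
  proof
    fix y assume "y \<in> x ` ({..<p} - {j})"
    then obtain k where k: "k < p" "k \<noteq> j" "y = x k" by auto
    define m where "m = (if k < j then k else k - 1)"
    have m: "m < p - 1" "del_idx j m = k" using k j by (auto simp: m_def del_idx_def)
    have "x k = (\<Sum>l<p-1. (d l * v m l) *\<^sub>R u l)"
      using svd m unfolding thin_svd_del_def by metis
    also have "\<dots> \<in> span (u ` {..<p-1})" by (intro span_sum span_scale span_base) auto
    finally show "y \<in> span (u ` {..<p-1})" using k by simp
  qed
  have ind: "independent (x ` ({..<p} - {j}))"
    using rank_indep[OF rank] by (rule independent_mono) auto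
  have "card (x ` ({..<p} - {j})) = p - 1"
    using rank_inj[OF rank] j
    by (subst card_image) (auto intro: inj_on_subset)
  hence d1: "dim (span (x ` ({..<p} - {j}))) = p - 1"
    using ind by (simp add: dim_eq_card_independent)
  have "dim (span (u ` {..<p-1})) \<le> card (u ` {..<p-1})"
    by (rule dim_le_card) auto
  also have "\<dots> \<le> p - 1" using card_image_le[of "{..<p-1}" u] by simp
  finally have d2: "dim (span (u ` {..<p-1})) \<le> p - 1" .
  show ?thesis
    by (rule subspace_dim_equal[symmetric]) (use sub d1 d2 span_minimal[OF sub] in auto)
qed


theorem proposition2p2:
  fixes x :: "nat \<Rightarrow> real ^ 'n" and p j :: nat
    and u :: "nat \<Rightarrow> real ^ 'n" and d :: "nat \<Rightarrow> real" and v :: "nat \<Rightarrow> nat \<Rightarrow> real"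
    and s :: real and xt :: "real ^ 'n"
  assumes rank: "full_col_rank x p"
    and unit: "\<forall>k<p. norm (x k) = 1"
    and j: "j < p"
    and svd: "thin_svd_del x p j u d v"
  defines "\<sigma>2 \<equiv> (norm (x j - UUt u (p-1) (x j)))\<^sup>2"
  shows "((\<forall>k<p. k \<noteq> j \<longrightarrow> x k \<bullet> xt = x k \<bullet> x j) \<and> x j \<bullet> xt = 1 - s \<and> xt \<bullet> xt = 1)
     \<longleftrightarrow> (0 \<le> s \<and> s \<le> 2 * \<sigma>2 \<and>
          (\<exists>r :: real ^ 'n. xt = (s / \<sigma>2) *\<^sub>R UUt u (p-1) (x j) + (1 - s / \<sigma>2) *\<^sub>R x j + r
             \<and> (\<forall>k<p. x k \<bullet> r = 0) \<and> norm r = sqrt (2 * s - s\<^sup>2 / \<sigma>2)))"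
proof -
  have orth: "\<forall>l<p-1. \<forall>l'<p-1. u l \<bullet> u l' = (if l = l' then 1 else 0)"
    using svd unfolding thin_svd_del_def by blast
  define S where "S = span (x ` ({..<p} - {j}))"
  define P where "P = UUt u (p-1) (x j)"
  define w where "w = x j - P"
  have SU: "span (u ` {..<p-1}) = S" using span_eq[OF rank j svd] S_def by simp
  have PS: "P \<in> S" using UUt_span[of u "p-1" "x j"] SU P_def by simp
  have Sw: "z \<bullet> w = 0" if "z \<in> S" for z
    using UUt_orth_span[OF orth, of z "x j"] that SU w_def P_def by simp
  have xkS: "x k \<in> S" if "k < p" "k \<noteq> j" for k
    using that S_def by (auto intro: span_base)
  have s2: "\<sigma>2 = w \<bullet> w" unfolding \<sigma>2_def w_def P_def by (simp add: power2_norm_eq_inner)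
  have wnz: "w \<noteq> 0"
  proof
    assume "w = 0"
    hence "x j = P" by (simp add: w_def)
    thus False using PS rank_notin[OF rank j] S_def by simp
  qed
  hence spos: "\<sigma>2 > 0" using s2 by simp
  have xjxj: "x j \<bullet> x j = 1" using unit j by (metis norm_eq_sqrt_inner real_sqrt_eq_1_iff)
  have Pw: "P \<bullet> w = 0" using Sw PS by simp
  have xjw: "x j \<bullet> w = \<sigma>2"
  proof -
    have "x j = w + P" by (simp add: w_def)
    hence "x j \<bullet> w = w \<bullet> w + P \<bullet> w" by (metis inner_add_left)
    thus ?thesis using Pw s2 by simp
  qed
  have xkw: "x k \<bullet> w = 0" if "k < p" "k \<noteq> j" for k using Sw xkS that by simp
  have rw: "r \<bullet> w = 0" if r: "\<forall>k<p. x k \<bullet> r = 0" for r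
  proof -
    have "orthogonal r P"
      by (rule orthogonal_to_span[OF PS[unfolded S_def]])
         (use r in \<open>auto simp: orthogonal_def inner_commute\<close>)
    hence "r \<bullet> P = 0" by (simp add: orthogonal_def)
    moreover have "r \<bullet> x j = 0" using r j by (simp add: inner_commute)
    ultimately show ?thesis by (simp add: w_def inner_diff_right)
  qed
  define a where "a = s / \<sigma>2"
  have as: "a * \<sigma>2 = s" using spos a_def by simp
  have rewr: "a *\<^sub>R P + (1 - a) *\<^sub>R x j = x j - a *\<^sub>R w"
    by (simp add: w_def algebra_simps)
  have sq: "(x j - a *\<^sub>R w) \<bullet> (x j - a *\<^sub>R w) = 1 - 2 * s + s\<^sup>2 / \<sigma>2"
  proof -
    have "(x j - a *\<^sub>R w) \<bullet> (x j - a *\<^sub>R w) = x j \<bullet> x j - 2 * a * (x j \<bullet> w) + a * a * (w \<bullet> w)"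
      by (simp add: inner_diff_left inner_diff_right inner_commute algebra_simps)
    also have "\<dots> = 1 - 2 * s + s\<^sup>2 / \<sigma>2"
      using xjxj xjw s2 spos by (simp add: a_def power2_eq_square field_simps)
    finally show ?thesis .
  qed
  have decomp: "xt \<bullet> xt = r \<bullet> r + (1 - 2 * s + s\<^sup>2 / \<sigma>2)"
    if xt: "xt = x j - a *\<^sub>R w + r" and r: "\<forall>k<p. x k \<bullet> r = 0" for r
  proof -
    have r1: "r \<bullet> w = 0" using rw[OF r] .
    have r2: "r \<bullet> x j = 0" using r j by (simp add: inner_commute)
    have "r \<bullet> (x j - a *\<^sub>R w) = 0" using r1 r2 by (simp add: inner_diff_right)
    hence "xt \<bullet> xt = (x j - a *\<^sub>R w) \<bullet> (x j - a *\<^sub>R w) + r \<bullet> r"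
      using xt by (simp add: inner_add_left inner_add_right inner_commute)
    thus ?thesis using sq by simp
  qed
  show ?thesis
  proof
    assume H: "(\<forall>k<p. k \<noteq> j \<longrightarrow> x k \<bullet> xt = x k \<bullet> x j) \<and> x j \<bullet> xt = 1 - s \<and> xt \<bullet> xt = 1"
    define r where "r = xt - (x j - a *\<^sub>R w)"
    have rperp: "\<forall>k<p. x k \<bullet> r = 0"
    proof (intro allI impI)
      fix k assume k: "k < p"
      show "x k \<bullet> r = 0"
      proof (cases "k = j")
        case True
        thus ?thesis using H xjxj xjw as by (simp add: r_def inner_diff_right)
      next
        case False
        thus ?thesis using H xkw[OF k False] k by (simp add: r_def inner_diff_right)
      qed
    qed
    have xt: "xt = x j - a *\<^sub>R w + r" by (simp add: r_def)
    have rr: "r \<bullet> r = 2 * s - s\<^sup>2 / \<sigma>2" using decomp[OF xt rperp] H by simp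
    have nn: "0 \<le> 2 * s - s\<^sup>2 / \<sigma>2" using rr[symmetric] by simp
    hence "0 \<le> s * (2 * \<sigma>2 - s)" using spos
      by (simp add: field_simps power2_eq_square)
    hence srange: "0 \<le> s \<and> s \<le> 2 * \<sigma>2" using spos
      by (smt (verit) mult_neg_neg mult_nonneg_nonpos zero_le_mult_iff)
    have "norm r = sqrt (2 * s - s\<^sup>2 / \<sigma>2)" using rr by (simp add: norm_eq_sqrt_inner)
    moreover have "xt = (s / \<sigma>2) *\<^sub>R UUt u (p-1) (x j) + (1 - s / \<sigma>2) *\<^sub>R x j + r"
      using xt rewr by (simp add: a_def P_def)
    ultimately show "0 \<le> s \<and> s \<le> 2 * \<sigma>2 \<and>
          (\<exists>r :: real ^ 'n. xt = (s / \<sigma>2) *\<^sub>R UUt u (p-1) (x j) + (1 - s / \<sigma>2) *\<^sub>R x j + r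
             \<and> (\<forall>k<p. x k \<bullet> r = 0) \<and> norm r = sqrt (2 * s - s\<^sup>2 / \<sigma>2))"
      using srange rperp by blast
  next
    assume H: "0 \<le> s \<and> s \<le> 2 * \<sigma>2 \<and>
          (\<exists>r :: real ^ 'n. xt = (s / \<sigma>2) *\<^sub>R UUt u (p-1) (x j) + (1 - s / \<sigma>2) *\<^sub>R x j + r
             \<and> (\<forall>k<p. x k \<bullet> r = 0) \<and> norm r = sqrt (2 * s - s\<^sup>2 / \<sigma>2))"
    then obtain r where r: "xt = (s / \<sigma>2) *\<^sub>R UUt u (p-1) (x j) + (1 - s / \<sigma>2) *\<^sub>R x j + r"
      "\<forall>k<p. x k \<bullet> r = 0" "norm r = sqrt (2 * s - s\<^sup>2 / \<sigma>2)" by blast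
    have xt: "xt = x j - a *\<^sub>R w + r" using r(1) rewr by (simp add: a_def P_def)
    have "0 \<le> s * (2 * \<sigma>2 - s)" using H by simp
    hence nn: "0 \<le> 2 * s - s\<^sup>2 / \<sigma>2" using spos
      by (simp add: field_simps power2_eq_square)
    have rr: "r \<bullet> r = 2 * s - s\<^sup>2 / \<sigma>2"
      proof -
      have "r \<bullet> r = (norm r)\<^sup>2" by (simp add: power2_norm_eq_inner)
      also have "\<dots> = 2 * s - s\<^sup>2 / \<sigma>2" using r(3) nn by simp
      finally show ?thesis .
    qed
    have A: "xt \<bullet> xt = 1" using decomp[OF xt r(2)] rr by simp
    have B: "x j \<bullet> xt = 1 - s"
      using xt r(2) j xjxj xjw as by (simp add: inner_add_right inner_diff_right)
    have C: "x k \<bullet> xt = x k \<bullet> x j" if "k < p" "k \<noteq> j" for k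
      using xt r(2) xkw[OF that] that by (simp add: inner_add_right inner_diff_right)
    show "(\<forall>k<p. k \<noteq> j \<longrightarrow> x k \<bullet> xt = x k \<bullet> x j) \<and> x j \<bullet> xt = 1 - s \<and> xt \<bullet> xt = 1"
      using A B C by blast
  qed
qed

end
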